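(* For every integer $n\ge 1$, $$m^*(n,4)\le m^*\big(n,4,2\lceil\log_2(n+1)\rceil\big)\le 4\lceil\log_2(n+1)\rceil.$$
   Context: For a binary matrix $M$ and a nonempty set $S$ of its columns, $S$ is a stopping set if the submatrix formed by $S$ has no row with exactly one $1$; $s(M)$ is the minimum size of a stopping set ($+\infty$ if none). $M$ is $d$-decodable if $s(M)\ge d+1$, and $(d,k)$-decodable if moreover every column has exactly $k$ ones. $m^*(n,d)$ (resp. $m^*(n,d,k)$) is the minimum $m$ such that an $m\times n$ $d$-decodable (resp. $(d,k)$-decodable) matrix exists. *)

theory Defs
  imports Complex_Main "HOL-Library.Extended_Nat"
begin

text \<open>An m x n binary matrix is a function M :: nat => nat => bool; M i j is the
(i,j) entry for i < m (rows) and j < n (columns). Entries outside the range are ignored.\<close>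

definition stopping_set :: "nat \<Rightarrow> nat \<Rightarrow> (nat \<Rightarrow> nat \<Rightarrow> bool) \<Rightarrow> nat set \<Rightarrow> bool" where
  "stopping_set m n M S \<longleftrightarrow> S \<noteq> {} \<and> S \<subseteq> {..<n} \<and>
     (\<forall>i<m. card {j \<in> S. M i j} \<noteq> 1)"

text \<open>s(M): minimum size of a stopping set, infinity if none.\<close>
definition stop_dist :: "nat \<Rightarrow> nat \<Rightarrow> (nat \<Rightarrow> nat \<Rightarrow> bool) \<Rightarrow> enat" where
  "stop_dist m n M = (INF S \<in> {S. stopping_set m n M S}. enat (card S))"

definition decodable :: "nat \<Rightarrow> nat \<Rightarrow> nat \<Rightarrow> (nat \<Rightarrow> nat \<Rightarrow> bool) \<Rightarrow> bool" where
  "decodable m n d M \<longleftrightarrow> stop_dist m n M \<ge> enat (d + 1)"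

definition decodable_k :: "nat \<Rightarrow> nat \<Rightarrow> nat \<Rightarrow> nat \<Rightarrow> (nat \<Rightarrow> nat \<Rightarrow> bool) \<Rightarrow> bool" where
  "decodable_k m n d k M \<longleftrightarrow> decodable m n d M \<and> (\<forall>j<n. card {i. i < m \<and> M i j} = k)"

text \<open>m*(n,d) and m*(n,d,k); infinity if no such matrix exists.\<close>
definition mstar :: "nat \<Rightarrow> nat \<Rightarrow> enat" where
  "mstar n d = (INF m \<in> {m. \<exists>M. decodable m n d M}. enat m)"

definition mstar_k :: "nat \<Rightarrow> nat \<Rightarrow> nat \<Rightarrow> enat" where
  "mstar_k n d k = (INF m \<in> {m. \<exists>M. decodable_k m n d k M}. enat m)"

end

theory Submission imports Defs "HOL-Algebra.Algebraic_Closure_Type" "HOL-Library.Z2" begin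
type_synonym L = "bit alg_closure"

lemma two_L: "(2::L) = 0"
proof -
  have "to_ac ((1::bit) + 1) = (0::L)" by simp
  hence "(1::L) + 1 = 0" by (metis to_ac_add to_ac_1)
  thus ?thesis by (metis one_add_one)
qed

lemma neg_L: "- (x::L) = x"
  using two_L by (metis add_eq_0_iff mult_2 mult_zero_left)

lemma of_nat_pow2_L: "t \<ge> 1 \<Longrightarrow> (of_nat (2^t) :: L) = 0"
  by (cases t) (simp_all add: two_L)

lemma frob_L: "((x::L) + y)^(2^k) = x^(2^k) + y^(2^k)"
proof (induction k)
  case (Suc k)
  have sq: "\<And>a b::L. (a+b)^2 = a^2+b^2"
    by (simp add: power2_sum two_L)
  have "(x+y)^(2^Suc k) = ((x+y)^(2^k))^2" by (simp add: power_mult[symmetric] mult.commute)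
  also have "\<dots> = (x^(2^k))^2 + (y^(2^k))^2" using Suc sq by simp
  finally show ?case by (simp add: power_mult[symmetric] mult.commute)
qed simp

lemma card_set_mset_le1:
  "(\<forall>x. count A x \<le> 1) \<Longrightarrow> card (set_mset A) = size A"
proof (induction A)
  case (add a A)
  have "count (add_mset a A) a \<le> 1" using add.prems by blast
  hence "count A a = 0" by simp
  hence "a \<notin># A" by (simp add: count_eq_zero_iff)
  moreover have "\<forall>x. count A x \<le> 1"
  proof
    fix x
    have "count A x \<le> count (add_mset a A) x" by simp
    thus "count A x \<le> 1" using add.prems le_trans by blast
  qed
  ultimately show ?case using add.IH by simp
qed simp

definition Fq :: "nat \<Rightarrow> L set" where "Fq t = {x. x^(2^t) = x}"

lemma card_Fq: assumes "t \<ge> 1" shows "card (Fq t) = 2^t" "finite (Fq t)"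
proof -
  define q :: nat where "q = 2^t"
  have "(2::nat)^1 \<le> 2^t" using assms by (rule power_increasing) simp
  hence q2: "q \<ge> 2" unfolding q_def by simp
  define p :: "L poly" where "p = monom 1 q - [:0,1:]"
  have poly_p: "poly p x = x^q - x" for x by (simp add: p_def poly_monom)
  have cq: "coeff p q = 1" using q2 by (simp add: p_def coeff_monom coeff_pCons split: nat.split)
  have deg: "degree p = q"
  proof (rule antisym)
    show "degree p \<le> q" unfolding p_def using q2
      by (intro degree_diff_le) (auto simp: degree_monom_le)
    show "q \<le> degree p" using cq by (intro le_degree) simp
  qed
  have lc: "lead_coeff p = 1" using deg cq by simp
  hence pnz: "p \<noteq> 0" by auto
  have oq: "(of_nat q :: L) = 0" using of_nat_pow2_L[OF assms] by (simp add: q_def)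
  have dp: "pderiv p = [:-1:]" unfolding p_def
    by (simp add: pderiv_diff pderiv_monom oq pderiv_pCons)
  obtain A where A: "size A = degree p" "p = smult (lead_coeff p) (\<Prod>x\<in>#A. [:-x, 1:])"
    using alg_closed_imp_factorization[OF pnz] by blast
  have pA: "p = (\<Prod>x\<in>#A. [:-x, 1:])" using A(2) lc by simp
  have roots: "{x. poly p x = 0} = set_mset A"
    by (subst pA) (auto simp: poly_prod_mset)
  have le1: "\<forall>x. count A x \<le> 1"
  proof (rule ccontr)
    assume "\<not> ?thesis"
    then obtain x where "count A x \<ge> 2" by (metis not_le Suc_le_eq Suc_1)
    then obtain B1 where B1: "A = add_mset x B1"
      by (metis multi_member_split count_greater_zero_iff not_numeral_le_zero gr0I)
    hence "count B1 x \<ge> 1" using \<open>count A x \<ge> 2\<close> by simp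
    then obtain B where "B1 = add_mset x B"
      by (metis multi_member_split count_greater_zero_iff One_nat_def Suc_le_eq)
    hence B: "A = add_mset x (add_mset x B)" using B1 by simp
    define r where "r = (\<Prod>y\<in>#B. [:-y, 1:])"
    have "p = [:-x,1:] * ([:-x,1:] * r)" by (simp add: pA B r_def)
    moreover define a where "a = [:-x,1:]"
    ultimately have pe: "p = a * (a * r)" by simp
    have pa: "poly a x = 0" by (simp add: a_def)
    have "poly (pderiv p) x = 0" unfolding pe
      by (simp only: pderiv_mult poly_add poly_mult pa mult_zero_left mult_zero_right add_0)
    thus False using dp by simp
  qed
  have "Fq t = {x. poly p x = 0}" unfolding Fq_def poly_p q_def by auto
  thus "card (Fq t) = 2^t" "finite (Fq t)" using roots card_set_mset_le1[OF le1] A(1) deg q_def by auto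
qed

lemma add_self_L: "(x::L) + x = 0"
  using two_L by (metis mult_2 mult_zero_left)

lemma Fq_zero: "t \<ge> 1 \<Longrightarrow> 0 \<in> Fq t"
  by (simp add: Fq_def)

lemma Fq_add: "x \<in> Fq t \<Longrightarrow> y \<in> Fq t \<Longrightarrow> x + y \<in> Fq t"
  by (simp add: Fq_def frob_L)

lemma Fq_cube: "x \<in> Fq t \<Longrightarrow> x^3 \<in> Fq t"
proof -
  assume "x \<in> Fq t"
  hence "x^(2^t) = x" by (simp add: Fq_def)
  hence "(x^3)^(2^t) = x^3" by (metis power_mult mult.commute)
  thus ?thesis by (simp add: Fq_def)
qed

lemma sum_symdiff_L:
  fixes b :: "nat \<Rightarrow> L"
  assumes "finite A" "finite B"
  shows "sum b A + sum b B = sum b ((A - B) \<union> (B - A))"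
proof -
  have "sum b A = sum b (A - B) + sum b (A \<inter> B)"
    using assms by (metis add.commute sum.Int_Diff)
  moreover have "sum b B = sum b (B - A) + sum b (A \<inter> B)"
    using assms by (metis add.commute sum.Int_Diff inf_commute)
  moreover have "sum b ((A - B) \<union> (B - A)) = sum b (A - B) + sum b (B - A)"
    using assms by (intro sum.union_disjoint) auto
  moreover have "\<And>x v w::L. (x + w) + (v + w) = (x + v) + (w + w)" by (simp add: ac_simps)
  ultimately show ?thesis
    by (simp add: add_self_L)
qed

lemma basis_exists:
  fixes F :: "L set"
  assumes fin: "finite F" and z: "0 \<in> F" and cl: "\<And>x y. x \<in> F \<Longrightarrow> y \<in> F \<Longrightarrow> x + y \<in> F"
  shows "\<exists>(k::nat) (b::nat \<Rightarrow> L). bij_betw (sum b) (Pow {..<k}) F"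
proof -
  define P where "P k \<longleftrightarrow> (\<exists>b::nat\<Rightarrow>L. inj_on (sum b) (Pow {..<k}) \<and> sum b ` Pow {..<k} \<subseteq> F)" for k
  have P0: "P 0" unfolding P_def using z by (intro exI[of _ "\<lambda>_. 0"]) auto
  have bnd: "k \<le> card F" if "P k" for k
  proof -
    from that obtain b where b: "inj_on (sum b) (Pow {..<k})" "sum b ` Pow {..<k} \<subseteq> F"
      unfolding P_def by blast
    have "card (sum b ` Pow {..<k}) = 2^k" using b(1) by (simp add: card_image card_Pow)
    moreover have "card (sum b ` Pow {..<k}) \<le> card F" using b(2) fin by (rule card_mono[rotated])
    ultimately have "2^k \<le> card F" by simp
    moreover have "k < 2^k" by (rule less_exp)
    ultimately show ?thesis by linarith
  qed
  define k where "k = Greatest P"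
  have Pk: "P k" unfolding k_def using P0 bnd by (rule GreatestI_nat)
  have kmax: "\<not> P (Suc k)"
  proof
    assume "P (Suc k)"
    hence "Suc k \<le> k" unfolding k_def using bnd by (rule Greatest_le_nat)
    thus False by simp
  qed
  from Pk obtain b where b: "inj_on (sum b) (Pow {..<k})" "sum b ` Pow {..<k} \<subseteq> F"
    unfolding P_def by blast
  have "sum b ` Pow {..<k} = F"
  proof (rule ccontr)
    assume "sum b ` Pow {..<k} \<noteq> F"
    then obtain y where y: "y \<in> F" "y \<notin> sum b ` Pow {..<k}" using b(2) by blast
    define b' where "b' = b(k := y)"
    have sb': "sum b' A = (if k \<in> A then y + sum b (A - {k}) else sum b A)"
      if "A \<subseteq> {..<Suc k}" for A
    proof -
      have fA: "finite A" using that finite_subset by blast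
      have eq: "sum b' (A - {k}) = sum b (A - {k})" by (rule sum.cong) (auto simp: b'_def)
      show ?thesis
      proof (cases "k \<in> A")
        case True
        have "sum b' A = b' k + sum b' (A - {k})" using True fA by (simp add: sum.remove)
        thus ?thesis using True eq by (simp add: b'_def)
      next
        case False
        hence "A - {k} = A" by auto
        thus ?thesis using eq False by simp
      qed
    qed
    have sub: "A - {k} \<subseteq> {..<k}" if "A \<subseteq> {..<Suc k}" for A using that by auto
    have sub2: "A \<subseteq> {..<k}" if "A \<subseteq> {..<Suc k}" "k \<notin> A" for A using that
      by (auto simp: less_Suc_eq)
    have fin_k: "finite A" if "A \<subseteq> {..<Suc k}" for A using that finite_subset by blast
    have ymem: False if "A \<subseteq> {..<k}" "B \<subseteq> {..<k}" "y + sum b A = sum b B" for A B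
    proof -
      have fAB: "finite A" "finite B" using that(1,2) finite_subset by auto
      have "y = y + sum b A + sum b A" by (simp add: add.assoc add_self_L)
      also have "\<dots> = sum b B + sum b A" using that(3) by simp
      also have "\<dots> = sum b ((B - A) \<union> (A - B))" using sum_symdiff_L fAB by blast
      finally have "y \<in> sum b ` Pow {..<k}" using that(1,2) by blast
      thus False using y(2) by blast
    qed
    have "P (Suc k)" unfolding P_def
    proof (intro exI[of _ b'] conjI)
      show "sum b' ` Pow {..<Suc k} \<subseteq> F"
      proof
        fix z assume "z \<in> sum b' ` Pow {..<Suc k}"
        then obtain A where A: "A \<subseteq> {..<Suc k}" "z = sum b' A" by blast
        show "z \<in> F"
        proof (cases "k \<in> A")
          case True
          have "z = y + sum b (A - {k})" using A sb'[OF A(1)] True by simp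
          moreover have "sum b (A - {k}) \<in> F" using sub[OF A(1)] b(2) by blast
          ultimately show ?thesis using y(1) cl by simp
        next
          case False
          have "z = sum b A" using A sb'[OF A(1)] False by simp
          thus ?thesis using sub2[OF A(1) False] b(2) by blast
        qed
      qed
      show "inj_on (sum b') (Pow {..<Suc k})"
      proof (rule inj_onI)
        fix A B assume A: "A \<in> Pow {..<Suc k}" and B: "B \<in> Pow {..<Suc k}"
          and eq: "sum b' A = sum b' B"
        have A1: "A \<subseteq> {..<Suc k}" and B1: "B \<subseteq> {..<Suc k}" using A B by auto
        show "A = B"
        proof (cases "k \<in> A"; cases "k \<in> B")
          assume kA: "k \<in> A" and kB: "k \<in> B"
          hence "sum b (A - {k}) = sum b (B - {k})" using eq sb'[OF A1] sb'[OF B1] by simp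
          hence "A - {k} = B - {k}" using b(1) sub[OF A1] sub[OF B1] by (auto dest: inj_onD)
          thus "A = B" using kA kB by blast
        next
          assume kA: "k \<in> A" and kB: "k \<notin> B"
          hence "y + sum b (A - {k}) = sum b B" using eq sb'[OF A1] sb'[OF B1] by simp
          thus "A = B" using ymem sub[OF A1] sub2[OF B1 kB] by blast
        next
          assume kA: "k \<notin> A" and kB: "k \<in> B"
          hence "y + sum b (B - {k}) = sum b A" using eq sb'[OF A1] sb'[OF B1] by simp
          thus "A = B" using ymem sub[OF B1] sub2[OF A1 kA] by blast
        next
          assume kA: "k \<notin> A" and kB: "k \<notin> B"
          hence "sum b A = sum b B" using eq sb'[OF A1] sb'[OF B1] by simp
          thus "A = B" using b(1) sub2[OF A1 kA] sub2[OF B1 kB] by (auto dest: inj_onD)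
        qed
      qed
    qed
    thus False using kmax by blast
  qed
  hence "bij_betw (sum b) (Pow {..<k}) F" using b(1) unfolding bij_betw_def by blast
  thus ?thesis by blast
qed

lemma card_less_Suc_filter:
  "card {r. r < Suc N \<and> R r} = card {r. r < N \<and> R r} + (if R N then 1 else 0)"
proof -
  have "{r. r < Suc N \<and> R r} = (if R N then insert N {r. r < N \<and> R r} else {r. r < N \<and> R r})"
    by (auto simp: less_Suc_eq)
  thus ?thesis by simp
qed

definition rowf :: "(nat \<Rightarrow> bool) \<Rightarrow> (nat \<Rightarrow> bool) \<Rightarrow> nat \<Rightarrow> bool" where
  "rowf P Q r = (if r mod 4 = 0 then P (r div 4) else if r mod 4 = 1 then \<not> P (r div 4)
     else if r mod 4 = 2 then Q (r div 4) else \<not> Q (r div 4))"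

lemma rowf_simps:
  "rowf P Q (4*i) = P i" "rowf P Q (4*i+1) = (\<not> P i)"
  "rowf P Q (4*i+2) = Q i" "rowf P Q (4*i+3) = (\<not> Q i)"
proof -
  have a: "(4*i+1) mod 4 = 1" "(4*i+1) div 4 = i" by presburger+
  have b: "(4*i+2) mod 4 = 2" "(4*i+2) div 4 = i" by presburger+
  have c: "(4*i+3) mod 4 = 3" "(4*i+3) div 4 = i" by presburger+
  show "rowf P Q (4*i) = P i" by (simp add: rowf_def)
  show "rowf P Q (4*i+1) = (\<not> P i)" unfolding rowf_def a by simp
  show "rowf P Q (4*i+2) = Q i" unfolding rowf_def b by simp
  show "rowf P Q (4*i+3) = (\<not> Q i)" unfolding rowf_def c by simp
qed

lemma card_rowf: "card {r. r < 4*t \<and> rowf P Q r} = 2*t"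
proof (induction t)
  case (Suc t)
  have e: "4 * Suc t = Suc (Suc (Suc (Suc (4*t))))" by simp
  show ?case unfolding e card_less_Suc_filter
    using Suc rowf_simps[of P Q t] by (simp add: numeral_eq_Suc)
qed simp

lemma pair_lemma:
  assumes fS: "finite S" and a1: "card {j\<in>S. P j} \<noteq> 1" and c1: "card {j\<in>S. \<not> P j} \<noteq> 1"
  shows "card S \<noteq> 1" "card S \<le> 3 \<Longrightarrow> j \<in> S \<Longrightarrow> j' \<in> S \<Longrightarrow> P j = P j'"
    "card S = 4 \<Longrightarrow> even (card {j\<in>S. P j})"
proof -
  have sum: "card {j\<in>S. P j} + card {j\<in>S. \<not> P j} = card S"
  proof -
    have "S = {j\<in>S. P j} \<union> {j\<in>S. \<not> P j}" by auto
    hence "card S = card ({j\<in>S. P j} \<union> {j\<in>S. \<not> P j})" by simp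
    also have "\<dots> = card {j\<in>S. P j} + card {j\<in>S. \<not> P j}"
      using fS by (intro card_Un_disjoint) auto
    finally show ?thesis by simp
  qed
  show "card S \<noteq> 1" using sum a1 c1 by linarith
  show "card S = 4 \<Longrightarrow> even (card {j\<in>S. P j})"
  proof -
    assume "card S = 4"
    hence "card {j\<in>S. P j} \<in> {0,2,4}" using sum a1 c1 by auto
    thus ?thesis by auto
  qed
  assume "card S \<le> 3" "j \<in> S" "j' \<in> S"
  hence "card {j\<in>S. P j} = 0 \<or> card {j\<in>S. \<not> P j} = 0" using sum a1 c1 by linarith
  moreover have "finite {j\<in>S. P j}" "finite {j\<in>S. \<not> P j}" using fS by auto
  ultimately have "{j\<in>S. P j} = {} \<or> {j\<in>S. \<not> P j} = {}" by auto
  thus "P j = P j'" using \<open>j \<in> S\<close> \<open>j' \<in> S\<close> by blast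
qed

lemma alg4:
  fixes x y z w :: L
  assumes "x + y + z + w = 0" "x^3 + y^3 + z^3 + w^3 = 0"
  shows "x = y \<or> y = z \<or> z = x"
proof -
  have w: "w = x + y + z"
  proof -
    have "w = w + (x + y + z) + (x + y + z)" by (simp add: add.assoc add_self_L)
    also have "w + (x + y + z) = 0" using assms(1) by (simp add: ac_simps)
    finally show ?thesis by simp
  qed
  have id: "x^3 + y^3 + z^3 + (x+y+z)^3 = 2*(x^3+y^3+z^3) + 3*((x+y)*(y+z)*(z+x))"
    by (simp add: power3_eq_cube algebra_simps numeral_eq_Suc)
  have three: "(3::L) = 1" using two_L by (metis add_0 numeral_plus_one one_add_one semiring_norm(5))
  have "(x+y)*(y+z)*(z+x) = 0" using assms(2) id two_L three w by simp
  hence "x + y = 0 \<or> y + z = 0 \<or> z + x = 0" by auto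
  moreover have "a = b" if "a + b = 0" for a b :: L
  proof -
    have "a = a + (b + b)" by (simp add: add_self_L)
    also have "\<dots> = (a + b) + b" by (simp add: add.assoc)
    finally show ?thesis using that by simp
  qed
  ultimately show ?thesis by blast
qed

lemma construction:
  assumes t1: "t \<ge> 1" and nt: "n \<le> 2^t"
  shows "\<exists>M. decodable_k (4*t) n 4 (2*t) M"
proof -
  define F where "F = Fq t"
  have finF: "finite F" and cardF: "card F = 2^t" using card_Fq[OF t1] by (auto simp: F_def)
  have F0: "0 \<in> F" using Fq_zero[OF t1] by (simp add: F_def)
  have Fadd: "x + y \<in> F" if "x \<in> F" "y \<in> F" for x y using that Fq_add by (simp add: F_def)
  have Fcube: "x^3 \<in> F" if "x \<in> F" for x using that Fq_cube by (simp add: F_def)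
  obtain k and b :: "nat \<Rightarrow> L" where bij0: "bij_betw (sum b) (Pow {..<k}) F"
    using basis_exists[OF finF F0 Fadd] by blast
  have "card (Pow {..<k}) = card F" using bij0 by (rule bij_betw_same_card)
  hence "(2::nat)^k = 2^t" using cardF by (simp add: card_Pow)
  hence "k = t" by simp
  hence bij: "bij_betw (sum b) (Pow {..<t}) F" using bij0 by simp
  have injb: "inj_on (sum b) (Pow {..<t})" and imb: "sum b ` Pow {..<t} = F"
    using bij by (auto simp: bij_betw_def)
  define \<phi> where "\<phi> = the_inv_into (Pow {..<t}) (sum b)"
  have phi_in: "\<phi> x \<subseteq> {..<t}" if "x \<in> F" for x
    using the_inv_into_into[OF injb, of x "Pow {..<t}"] that imb by (auto simp: \<phi>_def)
  have phi_sum: "sum b (\<phi> x) = x" if "x \<in> F" for x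
    using f_the_inv_into_f[OF injb, of x] that imb by (auto simp: \<phi>_def)
  have phi_of: "\<phi> (sum b A) = A" if "A \<subseteq> {..<t}" for A
    using the_inv_into_f_f[OF injb, of A] that by (auto simp: \<phi>_def)
  have phi_add: "\<phi> (x + y) = (\<phi> x - \<phi> y) \<union> (\<phi> y - \<phi> x)" if "x \<in> F" "y \<in> F" for x y
  proof -
    have f: "finite (\<phi> x)" "finite (\<phi> y)" using phi_in[OF that(1)] phi_in[OF that(2)]
      finite_subset by blast+
    have "x + y = sum b (\<phi> x) + sum b (\<phi> y)" using phi_sum that by simp
    also have "\<dots> = sum b ((\<phi> x - \<phi> y) \<union> (\<phi> y - \<phi> x))" using sum_symdiff_L f by blast
    finally show ?thesis using phi_of phi_in[OF that(1)] phi_in[OF that(2)]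
      by (metis (no_types, lifting) Diff_subset Un_least subset_trans)
  qed
  have phi0: "\<phi> 0 = {}" using phi_of[of "{}"] by simp
  have phi_big: "(\<Sum>j\<in>S. g j) \<in> F \<and> \<phi> (\<Sum>j\<in>S. g j) = {i. odd (card {j\<in>S. i \<in> \<phi> (g j)})}"
    if "finite S" "\<forall>j\<in>S. g j \<in> F" for S and g :: "nat \<Rightarrow> L"
    using that
  proof (induction S rule: finite_induct)
    case empty
    thus ?case using F0 phi0 by simp
  next
    case (insert a S)
    have ga: "g a \<in> F" using insert.prems by simp
    have IH: "(\<Sum>j\<in>S. g j) \<in> F" "\<phi> (\<Sum>j\<in>S. g j) = {i. odd (card {j\<in>S. i \<in> \<phi> (g j)})}"
      using insert.IH insert.prems by auto
    have s: "(\<Sum>j\<in>insert a S. g j) = g a + (\<Sum>j\<in>S. g j)" using insert.hyps by simp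
    have c: "card {j\<in>insert a S. i \<in> \<phi> (g j)} =
      (if i \<in> \<phi> (g a) then Suc (card {j\<in>S. i \<in> \<phi> (g j)}) else card {j\<in>S. i \<in> \<phi> (g j)})" for i
    proof -
      have "{j\<in>insert a S. i \<in> \<phi> (g j)} = (if i \<in> \<phi> (g a) then insert a {j\<in>S. i \<in> \<phi> (g j)} else {j\<in>S. i \<in> \<phi> (g j)})"
        by auto
      thus ?thesis using insert.hyps by simp
    qed
    show ?case unfolding s using Fadd[OF ga IH(1)] phi_add[OF ga IH(1)] IH(2) c by auto
  qed
  have "card {..<n} \<le> card F" using nt cardF by simp
  then obtain e where e: "e ` {..<n} \<subseteq> F" "inj_on e {..<n}"
    using card_le_inj[of "{..<n}" F] finF by auto
  define U where "U j = \<phi> (e j)" for j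
  define W where "W j = \<phi> ((e j)^3)" for j
  define M where "M r j = rowf (\<lambda>i. i \<in> U j) (\<lambda>i. i \<in> W j) r" for r j
  have weight: "\<forall>j<n. card {i. i < 4*t \<and> M i j} = 2*t"
    unfolding M_def using card_rowf by blast
  have dec: "decodable (4*t) n 4 M"
    unfolding decodable_def stop_dist_def
  proof (rule INF_greatest)
    fix S assume "S \<in> {S. stopping_set (4*t) n M S}"
    hence S: "S \<noteq> {}" "S \<subseteq> {..<n}" "\<And>i. i < 4*t \<Longrightarrow> card {j\<in>S. M i j} \<noteq> 1"
      by (auto simp: stopping_set_def)
    have fS: "finite S" using S(2) finite_subset by blast
    have eF: "e j \<in> F" if "j \<in> S" for j using that S(2) e(1) by blast
    have rows: "card {j\<in>S. i \<in> U j} \<noteq> 1" "card {j\<in>S. \<not> i \<in> U j} \<noteq> 1"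
       "card {j\<in>S. i \<in> W j} \<noteq> 1" "card {j\<in>S. \<not> i \<in> W j} \<noteq> 1" if "i < t" for i
    proof -
      have "4*i < 4*t" "4*i+1 < 4*t" "4*i+2 < 4*t" "4*i+3 < 4*t" using that by linarith+
      hence h: "card {j\<in>S. M (4*i) j} \<noteq> 1" "card {j\<in>S. M (4*i+1) j} \<noteq> 1"
        "card {j\<in>S. M (4*i+2) j} \<noteq> 1" "card {j\<in>S. M (4*i+3) j} \<noteq> 1" using S(3) by blast+
      thus "card {j\<in>S. i \<in> U j} \<noteq> 1" "card {j\<in>S. \<not> i \<in> U j} \<noteq> 1"
       "card {j\<in>S. i \<in> W j} \<noteq> 1" "card {j\<in>S. \<not> i \<in> W j} \<noteq> 1"
        unfolding M_def rowf_simps by simp_all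
    qed
    have "0 < t" using t1 by simp
    hence c1: "card S \<noteq> 1" using pair_lemma(1)[OF fS rows(1,2)] by blast
    show "enat (4 + 1) \<le> enat (card S)"
    proof (rule ccontr)
      assume "\<not> ?thesis"
      hence c4: "card S \<le> 4" by simp
      show False
      proof (cases "card S \<le> 3")
        case True
        have "j = j'" if "j \<in> S" "j' \<in> S" for j j'
        proof -
          have "U j = U j'"
          proof -
            have "\<forall>i<t. (i \<in> U j) = (i \<in> U j')"
              using pair_lemma(2)[OF fS rows(1,2) True that] by blast
            moreover have "U j \<subseteq> {..<t}" "U j' \<subseteq> {..<t}" using phi_in eF that by (auto simp: U_def)
            ultimately show ?thesis by blast
          qed
          hence "e j = e j'" using phi_sum eF that by (metis U_def)
          thus "j = j'" using e(2) S(2) that by (auto dest: inj_onD)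
        qed
        hence "card S \<le> Suc 0" using card_le_Suc0_iff_eq[OF fS] by blast
        moreover have "card S \<noteq> 0" using fS S(1) by simp
        ultimately show False using c1 by simp
      next
        case False
        hence c4': "card S = 4" using c4 by simp
        have cubeF: "(e j)^3 \<in> F" if "j \<in> S" for j using Fcube eF that by blast
        have zero: "(\<Sum>j\<in>S. g j) = 0"
          if gF: "\<forall>j\<in>S. g j \<in> F" and ev: "\<forall>i<t. even (card {j\<in>S. i \<in> \<phi> (g j)})"
             and sub: "\<forall>j\<in>S. \<phi> (g j) \<subseteq> {..<t}" for g
        proof -
          have "{i. odd (card {j\<in>S. i \<in> \<phi> (g j)})} = {}"
          proof -
            have "even (card {j\<in>S. i \<in> \<phi> (g j)})" for i
            proof (cases "i < t")
              case True thus ?thesis using ev by blast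
            next
              case False
              hence "{j\<in>S. i \<in> \<phi> (g j)} = {}" using sub by auto
              thus ?thesis by (metis card.empty even_zero)
            qed
            thus ?thesis by blast
          qed
          hence "\<phi> (\<Sum>j\<in>S. g j) = {}" using phi_big[OF fS gF] by simp
          hence "sum b (\<phi> (\<Sum>j\<in>S. g j)) = 0" by simp
          thus ?thesis using phi_sum phi_big[OF fS gF] by metis
        qed
        have z1: "(\<Sum>j\<in>S. e j) = 0"
          using zero[of e] eF phi_in pair_lemma(3)[OF fS rows(1,2) c4'] by (auto simp: U_def)
        have z2: "(\<Sum>j\<in>S. (e j)^3) = 0"
          using zero[of "\<lambda>j. (e j)^3"] cubeF phi_in pair_lemma(3)[OF fS rows(3,4) c4'] by (auto simp: W_def)
        obtain a S1 where A: "S = insert a S1" "a \<notin> S1" "card S1 = 3"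
          using card_eq_SucD[of S 3] c4' by auto
        obtain b' S2 where B: "S1 = insert b' S2" "b' \<notin> S2" "card S2 = 2"
          using card_eq_SucD[of S1 2] A(3) by auto
        obtain c S3 where C: "S2 = insert c S3" "c \<notin> S3" "card S3 = 1"
          using card_eq_SucD[of S2 1] B(3) by auto
        obtain d where D: "S3 = {d}" using C(3) card_1_singletonE by blast
        have dist: "a \<noteq> b'" "a \<noteq> c" "a \<noteq> d" "b' \<noteq> c" "b' \<noteq> d" "c \<noteq> d"
          using A B C D by auto
        have inS: "a \<in> S" "b' \<in> S" "c \<in> S" "d \<in> S" using A B C D by auto
        have "e a + e b' + e c + e d = 0" using z1 dist unfolding A B C D by (simp add: ac_simps)
        moreover have "(e a)^3 + (e b')^3 + (e c)^3 + (e d)^3 = 0" using z2 dist unfolding A B C D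
          by (simp add: ac_simps)
        ultimately have "e a = e b' \<or> e b' = e c \<or> e c = e a" by (rule alg4)
        moreover have "\<And>x y. x \<in> S \<Longrightarrow> y \<in> S \<Longrightarrow> e x = e y \<Longrightarrow> x = y"
          using e(2) S(2) by (auto dest: inj_onD)
        ultimately show False using dist inS by blast
      qed
    qed
  qed
  show ?thesis unfolding decodable_k_def using dec weight by blast
qed

theorem corollary4p4:
  fixes n :: nat
  assumes "n \<ge> 1"
  shows "mstar n 4 \<le> mstar_k n 4 (2 * nat \<lceil>log 2 (real n + 1)\<rceil>) \<and>
         mstar_k n 4 (2 * nat \<lceil>log 2 (real n + 1)\<rceil>) \<le> enat (4 * nat \<lceil>log 2 (real n + 1)\<rceil>)"
proof
  define t where "t = nat \<lceil>log 2 (real n + 1)\<rceil>"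
  have lpos: "log 2 (real n + 1) > 0" using assms by simp
  hence t1: "t \<ge> 1" unfolding t_def by linarith
  have "log 2 (real n + 1) \<le> real t" unfolding t_def using lpos by linarith
  hence "real n + 1 \<le> 2 powr real t" using log_le_iff[of 2 "real n + 1"] by simp
  hence "real n + 1 \<le> real (2^t)" by (simp add: powr_realpow)
  hence nt: "n \<le> 2^t" by linarith
  show "mstar n 4 \<le> mstar_k n 4 (2 * t)" unfolding mstar_def mstar_k_def
    by (rule INF_superset_mono) (auto simp: decodable_k_def)
  obtain M where "decodable_k (4*t) n 4 (2*t) M" using construction[OF t1 nt] by blast
  thus "mstar_k n 4 (2 * t) \<le> enat (4 * t)" unfolding mstar_k_def
    by (intro INF_lower2[of "4*t"]) auto
qed

end
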